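(* Let $\mathcal{G}$ be a 2-player finite game, let $y(t)$ solve $\dot y_k=v_k(Q(y))$, $k=1,2$, and let $x(t)=Q(y(t))$. If the score differences $y_{k\alpha}(t)-y_{k\beta}(t)$ remain bounded for all $t\ge0$, all $\alpha,\beta\in\mathcal{A}_k$ and $k=1,2$, then the time average $\bar x(t)=t^{-1}\int_0^tx(s)\,ds$ converges to the set of Nash equilibria of $\mathcal{G}$.
   Context: Setting: finite game with players $\mathcal{N}=\{1,2\}$, action sets $\mathcal{A}_k$, mixed strategies $\mathcal{X}_k=\Delta(\mathcal{A}_k)$, bilinear expected payoffs $u_k$, payoff vectors $v_k(x)=(u_k(\alpha;x_{-k}))_{\alpha\in\mathcal{A}_k}$. Each player has a penalty function $h_k$ on $\mathcal{X}_k$ (continuous, $C^\infty$ on relative interiors of faces, strongly convex: $h(tx_1+(1-t)x_2)\le th(x_1)+(1-t)h(x_2)-\tfrac12Kt(1-t)\|x_1-x_2\|^2$, $K>0$), with choice map $Q_k(y_k)=\arg\max_{x_k\in\mathcal{X}_k}\{\langle y_k,x_k\rangle-h_k(x_k)\}$; $Q=(Q_1,Q_2)$. Nash equilibrium: $u_k(x^* )\ge u_k(x_k;x^*_{-k})$ for all $x_k$, $k$. *)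

theory Defs
  imports "HOL-Analysis.Analysis"
begin

definition mixed_strats :: "(real ^ 'a::finite) set" where
  "mixed_strats = {x. (\<forall>i. 0 \<le> x $ i) \<and> (\<Sum>i\<in>UNIV. x $ i) = 1}"

definition face_relint :: "'a set \<Rightarrow> (real ^ 'a::finite) set" where
  "face_relint S = {x \<in> mixed_strats. \<forall>i. (i \<in> S \<longleftrightarrow> 0 < x $ i)}"

definition face_dirs :: "'a set \<Rightarrow> (real ^ 'a::finite) set" where
  "face_dirs S = {d. (\<forall>i. i \<notin> S \<longrightarrow> d $ i = 0) \<and> (\<Sum>i\<in>UNIV. d $ i) = 0}"

fun iter_dd :: "('v::real_vector \<Rightarrow> real) \<Rightarrow> 'v list \<Rightarrow> 'v \<Rightarrow> real" where
  "iter_dd f [] = f"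
| "iter_dd f (d # ds) = (\<lambda>x. deriv (\<lambda>t. iter_dd f ds (x + t *\<^sub>R d)) 0)"

text \<open>C-infinity on a relatively open set M of an affine subspace with direction space V:
  all iterated directional derivatives along V exist and are continuous on M.\<close>
definition smooth_rel :: "('v::real_normed_vector \<Rightarrow> real) \<Rightarrow> 'v set \<Rightarrow> 'v set \<Rightarrow> bool" where
  "smooth_rel f M V \<longleftrightarrow>
     (\<forall>ds. set ds \<subseteq> V \<longrightarrow>
        continuous_on M (iter_dd f ds) \<and>
        (\<forall>d\<in>V. \<forall>x\<in>M. (\<lambda>t. iter_dd f ds (x + t *\<^sub>R d)) differentiable (at 0)))"

definition penalty :: "(real ^ 'a::finite \<Rightarrow> real) \<Rightarrow> bool" where
  "penalty h \<longleftrightarrow>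
     continuous_on mixed_strats h \<and>
     (\<forall>S. S \<noteq> {} \<longrightarrow> smooth_rel h (face_relint S) (face_dirs S)) \<and>
     (\<exists>K>0. \<forall>x1\<in>mixed_strats. \<forall>x2\<in>mixed_strats. \<forall>t\<in>{0..1}.
        h (t *\<^sub>R x1 + (1 - t) *\<^sub>R x2)
          \<le> t * h x1 + (1 - t) * h x2 - 1/2 * K * t * (1 - t) * (norm (x1 - x2))\<^sup>2)"

definition choice :: "(real ^ 'a::finite \<Rightarrow> real) \<Rightarrow> real ^ 'a \<Rightarrow> real ^ 'a" where
  "choice h y = (THE x. x \<in> mixed_strats \<and> (\<forall>z\<in>mixed_strats. y \<bullet> z - h z \<le> y \<bullet> x - h x))"

definition exp_payoff :: "('a::finite \<Rightarrow> 'b::finite \<Rightarrow> real) \<Rightarrow> real ^ 'a \<Rightarrow> real ^ 'b \<Rightarrow> real" where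
  "exp_payoff u x1 x2 = (\<Sum>a\<in>UNIV. \<Sum>b\<in>UNIV. u a b * x1 $ a * x2 $ b)"

definition payvec1 :: "('a::finite \<Rightarrow> 'b::finite \<Rightarrow> real) \<Rightarrow> real ^ 'b \<Rightarrow> real ^ 'a" where
  "payvec1 u x2 = (\<chi> a. \<Sum>b\<in>UNIV. u a b * x2 $ b)"

definition payvec2 :: "('a::finite \<Rightarrow> 'b::finite \<Rightarrow> real) \<Rightarrow> real ^ 'a \<Rightarrow> real ^ 'b" where
  "payvec2 u x1 = (\<chi> b. \<Sum>a\<in>UNIV. u a b * x1 $ a)"

definition nash_equilibria ::
  "('a::finite \<Rightarrow> 'b::finite \<Rightarrow> real) \<Rightarrow> ('a \<Rightarrow> 'b \<Rightarrow> real) \<Rightarrow> ((real ^ 'a) \<times> (real ^ 'b)) set" where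
  "nash_equilibria u1 u2 = {(x1, x2). x1 \<in> mixed_strats \<and> x2 \<in> mixed_strats \<and>
      (\<forall>z\<in>mixed_strats. exp_payoff u1 z x2 \<le> exp_payoff u1 x1 x2) \<and>
      (\<forall>w\<in>mixed_strats. exp_payoff u2 x1 w \<le> exp_payoff u2 x1 x2)}"

end

theory Submission imports Defs begin

lemma ms_closed: "closed (mixed_strats :: (real^'a::finite) set)"
  unfolding mixed_strats_def
  by (intro closed_Collect_conj closed_Collect_all closed_Collect_le closed_Collect_eq continuous_intros)

lemma ms_bounded: "bounded (mixed_strats :: (real^'a::finite) set)"
proof -
  have "norm x \<le> 1" if "x \<in> mixed_strats" for x :: "real^'a"
  proof -
    have "norm x \<le> (\<Sum>i\<in>UNIV. \<bar>x$i\<bar>)" by (rule norm_le_l1_cart)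
    also have "\<dots> = (\<Sum>i\<in>UNIV. x$i)" using that by (auto simp: mixed_strats_def intro!: sum.cong)
    finally show ?thesis using that by (simp add: mixed_strats_def)
  qed
  then show ?thesis unfolding bounded_iff by blast
qed

lemma ms_compact: "compact (mixed_strats :: (real^'a::finite) set)"
  using ms_closed ms_bounded by (simp add: compact_eq_bounded_closed)

lemma ms_convex: "convex (mixed_strats :: (real^'a::finite) set)"
  unfolding convex_def mixed_strats_def
  by (auto simp: sum.distrib sum_distrib_left[symmetric])

lemma ms_nonempty: "(mixed_strats :: (real^'a::finite) set) \<noteq> {}"
proof -
  have "(\<chi> i. 1 / real CARD('a)) \<in> (mixed_strats :: (real^'a) set)"
    by (simp add: mixed_strats_def)
  then show ?thesis by blast
qed

lemma penalty_K:
  assumes "penalty h"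
  obtains K where "K > 0" "\<And>x1 x2 t. x1 \<in> mixed_strats \<Longrightarrow> x2 \<in> mixed_strats \<Longrightarrow> t \<in> {0..1} \<Longrightarrow>
        h (t *\<^sub>R x1 + (1 - t) *\<^sub>R x2)
          \<le> t * h x1 + (1 - t) * h x2 - 1/2 * K * t * (1 - t) * (norm (x1 - x2))\<^sup>2"
  using assms unfolding penalty_def by blast

definition ismax where "ismax h y x \<longleftrightarrow> x \<in> mixed_strats \<and> (\<forall>z\<in>mixed_strats. y \<bullet> z - h z \<le> y \<bullet> x - h x)"

lemma max_lip:
  fixes h :: "real^'a::finite \<Rightarrow> real"
  assumes K: "K > 0" and sc: "\<And>x1 x2 t. x1 \<in> mixed_strats \<Longrightarrow> x2 \<in> mixed_strats \<Longrightarrow> t \<in> {0..1} \<Longrightarrow>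
        h (t *\<^sub>R x1 + (1 - t) *\<^sub>R x2)
          \<le> t * h x1 + (1 - t) * h x2 - 1/2 * K * t * (1 - t) * (norm (x1 - x2))\<^sup>2"
    and m1: "ismax h y x" and m2: "ismax h y' x'"
  shows "norm (x - x') \<le> 2 / K * norm (y - y')"
proof -
  let ?z = "(1/2) *\<^sub>R x' + (1 - 1/2) *\<^sub>R x"
  have xm: "x \<in> mixed_strats" "x' \<in> mixed_strats" using m1 m2 by (auto simp: ismax_def)
  have zm: "?z \<in> mixed_strats" using ms_convex xm unfolding convex_def by auto
  have c: "h ?z \<le> 1/2 * h x' + 1/2 * h x - 1/2 * K * (1/2) * (1/2) * (norm (x' - x))\<^sup>2"
    using sc[OF xm(2) xm(1), of "1/2"] by simp
  have a: "y \<bullet> ?z - h ?z \<le> y \<bullet> x - h x" using m1 zm by (auto simp: ismax_def)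
  have b: "y' \<bullet> ?z - h ?z \<le> y' \<bullet> x' - h x'" using m2 zm by (auto simp: ismax_def)
  have e1: "y \<bullet> ?z = 1/2 * (y \<bullet> x') + 1/2 * (y \<bullet> x)" by (simp add: inner_add_right)
  have e2: "y' \<bullet> ?z = 1/2 * (y' \<bullet> x') + 1/2 * (y' \<bullet> x)" by (simp add: inner_add_right)
  have nn: "norm (x' - x) = norm (x - x')" by (rule norm_minus_commute)
  have "K/4 * (norm (x - x'))\<^sup>2 \<le> 1/2 * ((y - y') \<bullet> (x - x'))"
    using a b c e1 e2 nn by (simp add: inner_diff_left inner_diff_right algebra_simps)
  also have "\<dots> \<le> 1/2 * (norm (y - y') * norm (x - x'))"
    using norm_cauchy_schwarz[of "y - y'" "x - x'"] by simp
  finally have f: "K/2 * (norm (x - x'))\<^sup>2 \<le> norm (y - y') * norm (x - x')" by simp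
  show ?thesis
  proof (cases "norm (x - x') = 0")
    case True then show ?thesis using K by simp
  next
    case False
    then have p: "norm (x - x') > 0" by simp
    have "K/2 * norm (x - x') \<le> norm (y - y')"
      using f p by (simp add: power2_eq_square)
    then show ?thesis using K by (simp add: field_simps)
  qed
qed

lemma max_exists:
  fixes h :: "real^'a::finite \<Rightarrow> real"
  assumes "penalty h"
  shows "\<exists>x. ismax h y x"
proof -
  have "continuous_on mixed_strats h" using assms by (simp add: penalty_def)
  then have "continuous_on mixed_strats (\<lambda>z. y \<bullet> z - h z)" by (intro continuous_intros)
  from continuous_attains_sup[OF ms_compact ms_nonempty this] show ?thesis
    unfolding ismax_def by blast
qed

lemma choice_ismax:
  fixes h :: "real^'a::finite \<Rightarrow> real"
  assumes "penalty h"
  shows "ismax h y (choice h y)"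
proof -
  obtain K where K: "K > 0" and sc: "\<And>x1 x2 t. x1 \<in> mixed_strats \<Longrightarrow> x2 \<in> mixed_strats \<Longrightarrow> t \<in> {0..1} \<Longrightarrow>
        h (t *\<^sub>R x1 + (1 - t) *\<^sub>R x2)
          \<le> t * h x1 + (1 - t) * h x2 - 1/2 * K * t * (1 - t) * (norm (x1 - x2))\<^sup>2"
    using penalty_K[OF assms] by blast
  obtain x where x: "ismax h y x" using max_exists[OF assms] by blast
  have u: "x' = x" if "ismax h y x'" for x'
    using max_lip[OF K sc that x] by simp
  have "\<exists>!x. ismax h y x" using x u by blast
  then have "ismax h y (THE x. ismax h y x)" by (rule theI')
  then show ?thesis unfolding choice_def ismax_def .
qed

lemma choice_lip:
  fixes h :: "real^'a::finite \<Rightarrow> real"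
  assumes "penalty h"
  obtains K where "K > 0" "\<And>y y'. norm (choice h y - choice h y') \<le> 2 / K * norm (y - y')"
proof -
  obtain K where K: "K > 0" and sc: "\<And>x1 x2 t. x1 \<in> mixed_strats \<Longrightarrow> x2 \<in> mixed_strats \<Longrightarrow> t \<in> {0..1} \<Longrightarrow>
        h (t *\<^sub>R x1 + (1 - t) *\<^sub>R x2)
          \<le> t * h x1 + (1 - t) * h x2 - 1/2 * K * t * (1 - t) * (norm (x1 - x2))\<^sup>2"
    using penalty_K[OF assms] by blast
  show ?thesis using that[OF K max_lip[OF K sc choice_ismax[OF assms] choice_ismax[OF assms]]] .
qed

lemma choice_cont:
  fixes h :: "real^'a::finite \<Rightarrow> real"
  assumes "penalty h"
  shows "continuous_on UNIV (choice h)"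
proof -
  obtain K where K: "K > 0" and L: "\<And>y y'. norm (choice h y - choice h y') \<le> 2 / K * norm (y - y')"
    using choice_lip[OF assms] by blast
  show ?thesis
    unfolding continuous_on_iff
  proof (intro ballI allI impI)
    fix x e assume e: "(0::real) < e"
    show "\<exists>d>0. \<forall>x'\<in>UNIV. dist x' x < d \<longrightarrow> dist (choice h x') (choice h x) < e"
    proof (intro exI[of _ "e * K / 2"] conjI ballI impI)
      show "e * K / 2 > 0" using e K by simp
      fix x' assume "dist x' x < e * K / 2"
      then have "2 / K * norm (x' - x) < e" using K by (simp add: dist_norm field_simps)
      then show "dist (choice h x') (choice h x) < e" using L[of x' x] by (simp add: dist_norm)
    qed
  qed
qed

lemma payvec1_lin: "bounded_linear (payvec1 u)"
proof -
  have "linear (payvec1 u)"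
    by (rule linearI) (simp_all add: payvec1_def vec_eq_iff sum.distrib sum_distrib_left algebra_simps)
  then show ?thesis by (simp add: linear_conv_bounded_linear)
qed

lemma payvec2_lin: "bounded_linear (payvec2 u)"
proof -
  have "linear (payvec2 u)"
    by (rule linearI) (simp_all add: payvec2_def vec_eq_iff sum.distrib sum_distrib_left algebra_simps)
  then show ?thesis by (simp add: linear_conv_bounded_linear)
qed

lemma exp1: "exp_payoff u x1 x2 = (\<Sum>a\<in>UNIV. x1 $ a * payvec1 u x2 $ a)"
  by (simp add: exp_payoff_def payvec1_def sum_distrib_left algebra_simps)

lemma exp2: "exp_payoff u x1 x2 = (\<Sum>b\<in>UNIV. x2 $ b * payvec2 u x1 $ b)"
  unfolding exp_payoff_def payvec2_def
  by (subst sum.swap) (simp add: sum_distrib_left algebra_simps)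


lemma compact_small:
  fixes X :: "('c::metric_space) set" and g :: "'c \<Rightarrow> real"
  assumes X: "compact X" and gc: "continuous_on X g"
    and g0: "\<And>z. z \<in> X \<Longrightarrow> g z = 0 \<Longrightarrow> z \<in> N" and e: "e > 0" and gnn: "\<And>z. z \<in> X \<Longrightarrow> g z \<ge> 0"
  shows "\<exists>d>0. \<forall>z\<in>X. g z < d \<longrightarrow> infdist z N < e"
proof -
  let ?C = "X \<inter> {z. e \<le> infdist z N}"
  have cl: "closed {z. e \<le> infdist z N}"
    by (intro closed_Collect_le continuous_intros continuous_on_infdist)
  have C: "compact ?C" using compact_Int_closed[OF X cl] .
  show ?thesis
  proof (cases "?C = {}")
    case True
    then show ?thesis by (intro exI[of _ 1]) force
  next
    case False
    have "continuous_on ?C g" using gc by (rule continuous_on_subset) auto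
    from continuous_attains_inf[OF C False this] obtain z0 where
      z0: "z0 \<in> ?C" and mn: "\<And>z. z \<in> ?C \<Longrightarrow> g z0 \<le> g z" by blast
    have "g z0 \<noteq> 0"
    proof
      assume "g z0 = 0"
      then have "z0 \<in> N" using g0 z0 by auto
      then have "infdist z0 N = 0" by (rule infdist_zero)
      then show False using z0 e by auto
    qed
    moreover have "g z0 \<ge> 0" using gnn z0 by auto
    ultimately show ?thesis using mn by (intro exI[of _ "g z0"]) force
  qed
qed


lemma ode_int:
  fixes y :: "real \<Rightarrow> real^'a::finite" and x :: "real \<Rightarrow> real^'b::finite" and P :: "real^'b \<Rightarrow> real^'a"
  assumes ode: "\<forall>t\<ge>0. (y has_vector_derivative P (x t)) (at t within {0..})"
    and P: "bounded_linear P" and xc: "continuous_on {0..} x" and t: "t \<ge> 0"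
  shows "P (integral {0..t} x) = y t - y 0"
proof -
  have "((\<lambda>s. P (x s)) has_integral (y t - y 0)) {0..t}"
    using t by (intro fundamental_theorem_of_calculus)
      (auto intro: has_vector_derivative_within_subset[OF ode[rule_format]])
  moreover have "x integrable_on {0..t}"
    by (rule integrable_continuous_interval) (rule continuous_on_subset[OF xc], auto)
  ultimately show ?thesis using integral_linear[of x "{0..t}" P, OF _ P]
    by (simp add: o_def integral_unique)
qed

lemma avg_ms:
  fixes x :: "real \<Rightarrow> real^'a::finite"
  assumes xc: "continuous_on {0..} x" and xm: "\<And>s. s \<ge> 0 \<Longrightarrow> x s \<in> mixed_strats" and t: "t > 0"
  shows "(1/t) *\<^sub>R integral {0..t} x \<in> mixed_strats"
proof -
  have xi: "x integrable_on {0..t}"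
    by (rule integrable_continuous_interval) (rule continuous_on_subset[OF xc], auto)
  have ci: "(\<lambda>s. x s $ i) integrable_on {0..t}" for i
    using integrable_linear[OF xi bounded_linear_vec_nth[of i]] by (simp add: o_def)
  have nn: "0 \<le> integral {0..t} x $ i" for i
  proof -
    have "0 \<le> integral {0..t} (\<lambda>s. x s $ i)"
      by (rule integral_nonneg[OF ci]) (use xm in \<open>auto simp: mixed_strats_def\<close>)
    then show ?thesis using integral_component_eq_cart[OF xi] by simp
  qed
  have bl: "bounded_linear (\<lambda>v::real^'a. \<Sum>i\<in>UNIV. v $ i)"
    by (intro bounded_linear_sum bounded_linear_vec_nth)
  have "(\<Sum>i\<in>UNIV. integral {0..t} x $ i) = integral {0..t} (\<lambda>s. \<Sum>i\<in>UNIV. x s $ i)"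
    using integral_linear[OF xi bl] by (simp add: o_def)
  also have "\<dots> = integral {0..t} (\<lambda>s. 1)"
    by (rule integral_cong) (use xm in \<open>auto simp: mixed_strats_def\<close>)
  also have "\<dots> = t" using t by simp
  finally have s: "(\<Sum>i\<in>UNIV. integral {0..t} x $ i) = t" .
  show ?thesis unfolding mixed_strats_def
    using nn t s by (auto simp: sum_divide_distrib[symmetric])
qed


lemma const_pay:
  fixes v w :: "real^'a::finite"
  assumes "\<forall>a a'. v$a = v$a'" "w \<in> mixed_strats"
  shows "(\<Sum>a\<in>UNIV. w$a * v$a) = v$a0"
proof -
  have "(\<Sum>a\<in>UNIV. w$a * v$a) = (\<Sum>a\<in>UNIV. w$a * v$a0)" using assms(1) by (metis)
  also have "\<dots> = v$a0" using assms(2) by (simp add: mixed_strats_def sum_distrib_right[symmetric])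
  finally show ?thesis .
qed

lemma double_zero:
  fixes f :: "'a::finite \<Rightarrow> 'a \<Rightarrow> real"
  assumes "(\<Sum>a\<in>UNIV. \<Sum>a'\<in>UNIV. \<bar>f a a'\<bar>) = 0"
  shows "f a a' = 0"
proof -
  have "(\<Sum>a'\<in>UNIV. \<bar>f a a'\<bar>) = 0" using assms
    by (subst (asm) sum_nonneg_eq_0_iff) (auto intro: sum_nonneg)
  then show ?thesis by (subst (asm) sum_nonneg_eq_0_iff) auto
qed

theorem theorem6p1:
  fixes u1 u2 :: "'a::finite \<Rightarrow> 'b::finite \<Rightarrow> real"
    and h1 :: "real ^ 'a \<Rightarrow> real" and h2 :: "real ^ 'b \<Rightarrow> real"
    and y1 :: "real \<Rightarrow> real ^ 'a" and y2 :: "real \<Rightarrow> real ^ 'b"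
  assumes h1: "penalty h1" and h2: "penalty h2"
    and ode1: "\<forall>t\<ge>0. (y1 has_vector_derivative payvec1 u1 (choice h2 (y2 t))) (at t within {0..})"
    and ode2: "\<forall>t\<ge>0. (y2 has_vector_derivative payvec2 u2 (choice h1 (y1 t))) (at t within {0..})"
    and bnd1: "\<exists>M. \<forall>t\<ge>0. \<forall>a a'. \<bar>y1 t $ a - y1 t $ a'\<bar> \<le> M"
    and bnd2: "\<exists>M. \<forall>t\<ge>0. \<forall>b b'. \<bar>y2 t $ b - y2 t $ b'\<bar> \<le> M"
  shows "((\<lambda>t. infdist ((1 / t) *\<^sub>R integral {0..t} (\<lambda>s. (choice h1 (y1 s), choice h2 (y2 s))))
                  (nash_equilibria u1 u2)) \<longlongrightarrow> 0) at_top"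
proof -
  define X1 where "X1 = (\<lambda>s. choice h1 (y1 s))"
  define X2 where "X2 = (\<lambda>s. choice h2 (y2 s))"
  define F where "F = (\<lambda>s. (X1 s, X2 s))"
  define A where "A = (\<lambda>t. (1 / t) *\<^sub>R integral {0..t} F)"
  define X where "X = (mixed_strats :: (real^'a) set) \<times> (mixed_strats :: (real^'b) set)"
  define NE where "NE = nash_equilibria u1 u2"
  have cy1: "continuous_on {0..} y1"
    using ode1 by (auto intro!: continuous_on_eq_continuous_within[THEN iffD2] has_vector_derivative_continuous)
  have cy2: "continuous_on {0..} y2"
    using ode2 by (auto intro!: continuous_on_eq_continuous_within[THEN iffD2] has_vector_derivative_continuous)
  have cX1: "continuous_on {0..} X1" unfolding X1_def
    using continuous_on_compose2[OF choice_cont[OF h1] cy1] by auto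
  have cX2: "continuous_on {0..} X2" unfolding X2_def
    using continuous_on_compose2[OF choice_cont[OF h2] cy2] by auto
  have ode1': "\<forall>t\<ge>0. (y1 has_vector_derivative payvec1 u1 (X2 t)) (at t within {0..})"
    using ode1 by (simp add: X2_def)
  have ode2': "\<forall>t\<ge>0. (y2 has_vector_derivative payvec2 u2 (X1 t)) (at t within {0..})"
    using ode2 by (simp add: X1_def)
  have mX1: "X1 s \<in> mixed_strats" for s using choice_ismax[OF h1] by (simp add: X1_def ismax_def)
  have mX2: "X2 s \<in> mixed_strats" for s using choice_ismax[OF h2] by (simp add: X2_def ismax_def)
  have Fint: "F integrable_on {0..t}" for t unfolding F_def
    by (rule integrable_continuous_interval)
      (intro continuous_on_Pair continuous_on_subset[OF cX1] continuous_on_subset[OF cX2]; auto)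
  have fstA: "fst (A t) = (1/t) *\<^sub>R integral {0..t} X1" for t
    using integral_linear[OF Fint bounded_linear_fst] by (simp add: A_def F_def o_def)
  have sndA: "snd (A t) = (1/t) *\<^sub>R integral {0..t} X2" for t
    using integral_linear[OF Fint bounded_linear_snd] by (simp add: A_def F_def o_def)
  have AX: "A t \<in> X" if "t > 0" for t
    using avg_ms[OF cX1 _ that] avg_ms[OF cX2 _ that] mX1 mX2 fstA[of t] sndA[of t]
    by (simp add: X_def mem_Times_iff)
  obtain M1 where M1: "\<forall>t\<ge>0. \<forall>a a'. \<bar>y1 t $ a - y1 t $ a'\<bar> \<le> M1" using bnd1 by blast
  obtain M2 where M2: "\<forall>t\<ge>0. \<forall>b b'. \<bar>y2 t $ b - y2 t $ b'\<bar> \<le> M2" using bnd2 by blast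
  have M1p: "M1 \<ge> 0" using M1 by fastforce
  have M2p: "M2 \<ge> 0" using M2 by fastforce
  define C where "C = 2 * M1 + 2 * M2"
  have Cp: "C \<ge> 0" using M1p M2p by (simp add: C_def)
  have D1: "\<bar>payvec1 u1 (snd (A t)) $ a - payvec1 u1 (snd (A t)) $ a'\<bar> \<le> C / t" if t: "t > 0" for t a a'
  proof -
    have "payvec1 u1 (snd (A t)) = (1/t) *\<^sub>R (y1 t - y1 0)"
      using ode_int[OF ode1' payvec1_lin cX2, of t] t
      by (simp add: sndA linear_cmul[OF bounded_linear.linear[OF payvec1_lin]])
    then have "payvec1 u1 (snd (A t)) $ a - payvec1 u1 (snd (A t)) $ a'
       = ((y1 t $ a - y1 t $ a') - (y1 0 $ a - y1 0 $ a')) / t" by (simp add: diff_divide_distrib)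
    moreover have "\<bar>(y1 t $ a - y1 t $ a') - (y1 0 $ a - y1 0 $ a')\<bar> \<le> C"
      using M1[rule_format, of t a a'] M1[rule_format, of 0 a a'] t M2p by (simp add: C_def)
    ultimately show ?thesis using t by (simp add: abs_divide divide_right_mono)
  qed
  have D2: "\<bar>payvec2 u2 (fst (A t)) $ b - payvec2 u2 (fst (A t)) $ b'\<bar> \<le> C / t" if t: "t > 0" for t b b'
  proof -
    have "payvec2 u2 (fst (A t)) = (1/t) *\<^sub>R (y2 t - y2 0)"
      using ode_int[OF ode2' payvec2_lin cX1, of t] t
      by (simp add: fstA linear_cmul[OF bounded_linear.linear[OF payvec2_lin]])
    then have "payvec2 u2 (fst (A t)) $ b - payvec2 u2 (fst (A t)) $ b'
       = ((y2 t $ b - y2 t $ b') - (y2 0 $ b - y2 0 $ b')) / t" by (simp add: diff_divide_distrib)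
    moreover have "\<bar>(y2 t $ b - y2 t $ b') - (y2 0 $ b - y2 0 $ b')\<bar> \<le> C"
      using M2[rule_format, of t b b'] M2[rule_format, of 0 b b'] t M1p by (simp add: C_def)
    ultimately show ?thesis using t by (simp add: abs_divide divide_right_mono)
  qed
  define g where "g = (\<lambda>z. (\<Sum>a\<in>UNIV. \<Sum>a'\<in>UNIV. \<bar>payvec1 u1 (snd z) $ a - payvec1 u1 (snd z) $ a'\<bar>)
      + (\<Sum>b\<in>UNIV. \<Sum>b'\<in>UNIV. \<bar>payvec2 u2 (fst z) $ b - payvec2 u2 (fst z) $ b'\<bar>))"
  define N where "N = real (CARD('a) * CARD('a) + CARD('b) * CARD('b))"
  have gb: "g (A t) \<le> N * C / t" if t: "t > 0" for t
  proof -
    have "(\<Sum>a\<in>UNIV. \<Sum>a'\<in>UNIV. \<bar>payvec1 u1 (snd (A t)) $ a - payvec1 u1 (snd (A t)) $ a'\<bar>)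
       \<le> (\<Sum>a\<in>(UNIV::'a set). \<Sum>a'\<in>(UNIV::'a set). C / t)"
      by (intro sum_mono D1 t)
    moreover have "(\<Sum>b\<in>UNIV. \<Sum>b'\<in>UNIV. \<bar>payvec2 u2 (fst (A t)) $ b - payvec2 u2 (fst (A t)) $ b'\<bar>)
       \<le> (\<Sum>b\<in>(UNIV::'b set). \<Sum>b'\<in>(UNIV::'b set). C / t)"
      by (intro sum_mono D2 t)
    ultimately show ?thesis unfolding g_def N_def by (simp add: algebra_simps add_divide_distrib)
  qed
  have gc: "continuous_on X g"
    unfolding g_def payvec1_def payvec2_def by (simp, intro continuous_intros)
  have gnn: "g z \<ge> 0" for z unfolding g_def by (intro add_nonneg_nonneg sum_nonneg) auto
  have g0: "z \<in> NE" if z: "z \<in> X" "g z = 0" for z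
  proof -
    obtain z1 z2 where zz: "z = (z1, z2)" by (cases z)
    have s1: "(\<Sum>a\<in>UNIV. \<Sum>a'\<in>UNIV. \<bar>payvec1 u1 z2 $ a - payvec1 u1 z2 $ a'\<bar>) = 0"
     and s2: "(\<Sum>b\<in>UNIV. \<Sum>b'\<in>UNIV. \<bar>payvec2 u2 z1 $ b - payvec2 u2 z1 $ b'\<bar>) = 0"
      using z(2) unfolding g_def zz by (simp_all add: add_nonneg_eq_0_iff sum_nonneg)
    have c1: "\<forall>a a'. payvec1 u1 z2 $ a = payvec1 u1 z2 $ a'" using double_zero[OF s1] by simp
    have c2: "\<forall>b b'. payvec2 u2 z1 $ b = payvec2 u2 z1 $ b'" using double_zero[OF s2] by simp
    have m: "z1 \<in> mixed_strats" "z2 \<in> mixed_strats" using z(1) by (auto simp: X_def zz)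
    have e1: "exp_payoff u1 w z2 = payvec1 u1 z2 $ undefined" if "w \<in> mixed_strats" for w
      unfolding exp1 by (rule const_pay[OF c1 that])
    have e2: "exp_payoff u2 z1 w = payvec2 u2 z1 $ undefined" if "w \<in> mixed_strats" for w
      unfolding exp2 by (rule const_pay[OF c2 that])
    show ?thesis unfolding NE_def nash_equilibria_def zz
      using m e1 e2 by simp
  qed
  have XC: "compact X" unfolding X_def by (intro compact_Times ms_compact)
  have "((\<lambda>t. infdist (A t) NE) \<longlongrightarrow> 0) at_top"
    unfolding tendsto_iff
  proof (intro allI impI)
    fix e :: real assume e: "e > 0"
    obtain d where d: "d > 0" and dd: "\<And>z. z \<in> X \<Longrightarrow> g z < d \<Longrightarrow> infdist z NE < e"
      using compact_small[OF XC gc g0 e gnn] by blast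
    have NCp: "N * C \<ge> 0" using Cp by (simp add: N_def)
    show "\<forall>\<^sub>F t in at_top. dist (infdist (A t) NE) 0 < e"
      unfolding eventually_at_top_linorder
    proof (intro exI[of _ "N * C / d + 1"] allI impI)
      fix t assume t: "t \<ge> N * C / d + 1"
      have tp: "t > 0" using t NCp d by (smt (verit) divide_nonneg_pos)
      have "N * C < t * d" using t d NCp by (simp add: field_simps)
      then have "N * C / t < d" using tp by (simp add: field_simps)
      then have "g (A t) < d" using gb[OF tp] by linarith
      then have "infdist (A t) NE < e" using dd AX[OF tp] by blast
      then show "dist (infdist (A t) NE) 0 < e" by (simp add: infdist_nonneg)
    qed
  qed
  then show ?thesis unfolding A_def F_def X1_def X2_def NE_def .
qed

end
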